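(* Let $C>1$, $\alpha\in(0,1/4)$, $\gamma>C(20\alpha)^{1/5}$ and $r>5/\gamma$. Suppose $H$ is sampled from a $Cr/n$-spread distribution on subgraphs of $K_{n,n}$. Then, with probability at least $1-n^{-14}$, every $V\subset V(K_{n,n})$ with $|V|<2\alpha n$ satisfies $|E(H[V])|\le \gamma r|V|$ (i.e. $H$ is $(\alpha,\gamma r/n)$-sparse).
   Context: A random subgraph $H$ of $K_{n,n}$ is $q$-spread if $\mathbb{P}(S\subset H)\le q^{|S|}$ for every $S\subset E(K_{n,n})$. $H[V]$ denotes the subgraph of $H$ induced by $V$. *)

theory Defs
  imports "HOL-Probability.Probability"
begin

text \<open>An edge is identified with the pair (i, j) meaning the edge {Inl i, Inr j}.\<close>

definition Knn_vertices :: "nat \<Rightarrow> (nat + nat) set" where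
  "Knn_vertices n = Inl ` {..<n} \<union> Inr ` {..<n}"

definition Knn_edges :: "nat \<Rightarrow> (nat \<times> nat) set" where
  "Knn_edges n = {..<n} \<times> {..<n}"

definition induced_edges :: "(nat \<times> nat) set \<Rightarrow> (nat + nat) set \<Rightarrow> (nat \<times> nat) set" where
  "induced_edges H V = {(i, j) \<in> H. Inl i \<in> V \<and> Inr j \<in> V}"

definition spread :: "real \<Rightarrow> nat \<Rightarrow> (nat \<times> nat) set pmf \<Rightarrow> bool" where
  "spread q n \<mu> \<longleftrightarrow> set_pmf \<mu> \<subseteq> Pow (Knn_edges n) \<and>
     (\<forall>S \<subseteq> Knn_edges n. measure_pmf.prob \<mu> {H. S \<subseteq> H} \<le> q ^ card S)"

definition sparse :: "nat \<Rightarrow> real \<Rightarrow> real \<Rightarrow> (nat \<times> nat) set \<Rightarrow> bool" where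
  "sparse n \<alpha> p H \<longleftrightarrow> (\<forall>V \<subseteq> Knn_vertices n. real (card V) < 2 * \<alpha> * real n \<longrightarrow>
      real (card (induced_edges H V)) \<le> p * real n * real (card V))"

end

theory Submission
  imports Defs
begin


lemma kk_le: "real k ^ k \<le> 3 ^ k * fact k"
proof -
  have s: "summable (\<lambda>j. real k ^ j /\<^sub>R fact j)"
    using exp_converges[of "real k"] sums_summable by blast
  have "real k ^ k / fact k \<le> (\<Sum>j. real k ^ j /\<^sub>R fact j)"
    using sum_le_suminf[OF s, of "{k}"] by (simp add: divide_inverse_commute)
  also have "\<dots> = exp (real k)" using exp_converges[of "real k"] sums_unique by metis
  also have "\<dots> = exp 1 ^ k" by (metis exp_of_nat_mult mult.right_neutral)
  also have "\<dots> \<le> 3 ^ k" by (intro power_mono exp_le) auto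
  finally show ?thesis by (simp add: divide_le_eq mult.commute)
qed

lemma choose_bound:
  fixes q :: real assumes "q \<ge> 0" "k > 0"
  shows "real (m choose k) * q ^ k \<le> (3 * real m * q / real k) ^ k"
proof -
  have "real (m choose k) * fact k \<le> real m ^ k"
    using binomial_fact_pow[of m k] by (metis of_nat_fact of_nat_le_iff of_nat_mult of_nat_power)
  hence "real (m choose k) \<le> real m ^ k / fact k" by (simp add: field_simps)
  also have "\<dots> \<le> real m ^ k * 3 ^ k / real k ^ k"
  proof -
    have "real m ^ k * real k ^ k \<le> real m ^ k * (3 ^ k * fact k)"
      using kk_le[of k] by (intro mult_left_mono) auto
    thus ?thesis using assms by (simp add: field_simps)
  qed
  finally have "real (m choose k) * q ^ k \<le> real m ^ k * 3 ^ k / real k ^ k * q ^ k"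
    using assms by (intro mult_right_mono) auto
  also have "\<dots> = (3 * real m * q / real k) ^ k" by (simp add: power_mult_distrib power_divide field_simps)
  finally show ?thesis .
qed

lemma pow14: "21 \<le> v \<Longrightarrow> 2 * real v ^ 14 \<le> 14 ^ v"
proof (induction v rule: dec_induct)
  case base thus ?case by simp
next
  case (step v)
  have v: "real v \<ge> 21" using step by simp
  have "(real v + 1)^14 = ((real v + 1)/real v)^14 * real v ^ 14" using v by (simp add: power_divide)
  also have "\<dots> \<le> (22/21)^14 * real v ^ 14"
  proof (intro mult_right_mono power_mono)
    show "(real v + 1) / real v \<le> 22 / 21" using v by (simp add: field_simps)
  qed (use v in auto)
  also have "\<dots> \<le> 14 * real v ^ 14" by (intro mult_right_mono) (auto simp: power_divide)
  finally have "(real v + 1)^14 \<le> 14 * real v ^ 14" .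
    thus ?case using step by (simp add: add.commute)
qed

lemma geo: "(\<Sum>v\<le>N. 1 / (2::real) ^ (v+1)) \<le> 1"
proof -
  have "(\<Sum>v\<le>N. 1 / (2::real) ^ (v+1)) = 1 - 1/2^(N+1)" by (induction N) (auto simp: field_simps)
  thus ?thesis by simp
qed


lemma fr: "(y::real) > 0 \<Longrightarrow> w > 0 \<Longrightarrow> x*w \<le> z*y \<Longrightarrow> x/y \<le> z/w"
  by (simp add: frac_le_eq divide_nonpos_pos)

lemma perV:
  fixes C \<alpha> \<gamma> r :: real and n m k v :: nat
  assumes C: "C > 1" and a: "0 < \<alpha>" "\<alpha> < 1/4" and g: "\<gamma> > 0" "\<gamma>^5 > 20*\<alpha>*C^5"
    and r: "r > 0" "\<gamma> * r > 5" and n: "n > 0" and v: "v > 0" "real v < 2*\<alpha>*real n"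
    and k: "real k > \<gamma> * r * real v" and m: "4 * m \<le> v^2"
  shows "real (m choose k) * (C*r/real n)^k \<le> (243 * real v^4 / (10240 * real n^4))^v"
proof -
  define y0 where "y0 = 3*C*real v/(4*\<gamma>*real n)"
  have kpos: "k > 0" using k g r v by (metis gr0I mult_pos_pos of_nat_0 of_nat_0_less_iff order.asym)
  have k5: "k \<ge> 5* v"
  proof -
    have "5 * real v < \<gamma> * r * real v" using r v by (intro mult_strict_right_mono) auto
    hence "real k > 5 * real v" using k by linarith
    thus ?thesis by linarith
  qed
  have mr: "4 * real m \<le> real v ^ 2" using m by (metis of_nat_le_iff of_nat_mult of_nat_numeral of_nat_power)
  have b0: "0 \<le> 3 * real m * (C*r/real n) / real k" using C r by auto
  have b1: "3 * real m * (C*r/real n) / real k \<le> y0"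
  proof -
    have "4*real m*\<gamma>*r \<le> real v^2 * \<gamma> * r" using mr g r by auto
    also have "\<dots> = real v * (\<gamma> * r * real v)" by (simp add: power2_eq_square)
    also have "\<dots> \<le> real v * real k" using k v by (intro mult_left_mono) auto
    finally have h: "4*real m*\<gamma>*r \<le> real v * real k" .
    have "3 * real m * (C*r) * (4*\<gamma>*real n) \<le> 3*C*real v * (real n * real k)"
      using mult_left_mono[OF h, of "3*C*real n"] C n by (simp add: algebra_simps)
    thus ?thesis unfolding y0_def using kpos g n C
      by (simp add: divide_le_eq le_divide_eq field_simps)
  qed
  have y1: "y0 \<le> 1"
  proof -
    have "(3*C*\<alpha>)^5 \<le> (2*\<gamma>)^5"
    proof -
      have "\<alpha>^4 \<le> 1" using a by (simp add: power_le_one)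
      hence "243*\<alpha>^4 * (\<alpha>*C^5) \<le> 640 * (\<alpha>*C^5)" using a C by (intro mult_right_mono) auto
      moreover have "(3*C*\<alpha>)^5 = 243*\<alpha>^4 * (\<alpha>*C^5)" by (simp add: eval_nat_numeral)
      moreover have "(2*\<gamma>)^5 = 32*\<gamma>^5" by (simp add: eval_nat_numeral)
      ultimately show ?thesis using g by linarith
    qed
    hence "3*C*\<alpha> \<le> 2*\<gamma>"
    proof (rule contrapos_pp)
      assume "\<not> 3*C*\<alpha> \<le> 2*\<gamma>"
      hence "(2*\<gamma>)^5 < (3*C*\<alpha>)^5" using g by (intro power_strict_mono) auto
      thus "\<not> (3*C*\<alpha>)^5 \<le> (2*\<gamma>)^5" by simp
    qed
    hence h: "3*C*\<alpha> * (2*real n) \<le> 2*\<gamma> * (2*real n)" using n by (intro mult_right_mono) auto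
    have "3*C*real v \<le> 3*C*(2*\<alpha>*real n)" using v C by (intro mult_left_mono) auto
    hence "3*C*real v \<le> 4*\<gamma>*real n" using h by (simp add: algebra_simps)
    thus ?thesis unfolding y0_def using g n by (simp add: divide_le_eq)
  qed
  have y0pos: "0 \<le> y0" unfolding y0_def using C g by auto
  have "real (m choose k) * (C*r/real n)^k \<le> (3 * real m * (C*r/real n) / real k) ^ k"
    by (rule choose_bound[OF _ kpos]) (use C r in auto)
  also have "\<dots> \<le> y0 ^ k" using b0 b1 by (intro power_mono) auto
  also have "\<dots> \<le> y0 ^ (5* v)" using y0pos y1 k5 by (intro power_decreasing) auto
  also have "\<dots> = (y0^5)^v" by (simp add: power_mult)
  also have "\<dots> \<le> (243 * real v^4 / (10240 * real n^4))^v"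
  proof (intro power_mono)
    have "10 * C^5 * real v \<le> \<gamma>^5 * real n"
    proof -
      have "10 * C^5 * real v \<le> 10*C^5 * (2*\<alpha>*real n)" using v C by (intro mult_left_mono) auto
      also have "\<dots> = (20*\<alpha>*C^5) * real n" by simp
      also have "\<dots> \<le> \<gamma>^5 * real n" using g by (intro mult_right_mono) auto
      finally show ?thesis .
    qed
    hence hh: "(10 * C^5 * real v) * (243*1024*real v^4*real n^4) \<le> (\<gamma>^5 * real n) * (243*1024*real v^4*real n^4)"
      by (intro mult_right_mono) auto
    have p5: "\<And>x::real. x^5 = x * x^4" by (simp add: eval_nat_numeral)
    have E: "243 * C^5 * real v^5 * (10240 * real n^4) = (10 * C^5 * real v) * (243*1024*real v^4*real n^4)"
      "243 * real v^4 * (1024*\<gamma>^5 * real n^5) = (\<gamma>^5 * real n) * (243*1024*real v^4*real n^4)"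
      by (simp_all add: eval_nat_numeral algebra_simps)
    have I: "243 * C^5 * real v^5 * (10240 * real n^4) \<le> 243 * real v^4 * (1024*\<gamma>^5 * real n^5)"
      by (subst E(1), subst E(2), rule hh)
    have Y: "y0^5 = 243 * C^5 * real v^5 / (1024*\<gamma>^5 * real n^5)"
      unfolding y0_def by (simp add: power_divide power_mult_distrib)
    have Bp: "1024*\<gamma>^5 * real n^5 > 0" "10240 * real n^4 > 0" using g n by auto
    show "y0^5 \<le> 243 * real v^4 / (10240 * real n^4)"
      unfolding Y by (rule fr[OF Bp I])
  qed (use y0pos in auto)
  finally show ?thesis .
qed

lemma perv:
  fixes n v :: nat
  assumes "n > 0" "21 \<le> v" "2 * v \<le> n"
  shows "real (2*n choose v) * (243 * real v^4 / (10240 * real n^4))^v \<le> 1/(real n^14 * 2^(v+1))"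
proof -
  have vp: "real v > 0" using assms by auto
  have np: "real n > 0" using assms by auto
  have w: "real v / real n \<le> 1/2" using assms by (simp add: divide_le_eq)
  have "real (2*n choose v) * fact v \<le> real (2*n) ^ v"
    using binomial_fact_pow[of "2*n" v] by (metis of_nat_fact of_nat_le_iff of_nat_mult of_nat_power)
  hence "real (2*n choose v) * (real v ^ v) \<le> real (2*n) ^ v * 3^v"
  proof -
    have "real (2*n choose v) * (real v ^ v) \<le> real (2*n choose v) * (3^v * fact v)"
      using kk_le[of v] by (intro mult_left_mono) auto
    also have "\<dots> = 3^v * (real (2*n choose v) * fact v)" by simp
    also have "\<dots> \<le> 3^v * real (2*n) ^ v" using \<open>real (2*n choose v) * fact v \<le> real (2*n) ^ v\<close> by (intro mult_left_mono) auto
    finally show ?thesis by (simp add: mult_ac)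
  qed
  hence c: "real (2*n choose v) \<le> (real (2*n) * 3 / real v)^v"
  proof -
    have six: "(6::real)^v = 2^v * 3^v" by (simp flip: power_mult_distrib)
    show ?thesis using vp \<open>real (2*n choose v) * (real v ^ v) \<le> real (2*n) ^ v * 3^v\<close>
      by (simp add: pos_le_divide_eq power_divide power_mult_distrib six mult_ac)
  qed
  define w where "w = real v / real n"
  have w0: "0 \<le> w" using vp np unfolding w_def by auto
  have w1: "w \<le> 1/2" using w unfolding w_def .
  have base: "(real (2*n) * 3 / real v) * (243 * real v^4 / (10240 * real n^4)) = 1458/10240 * w^2 * w"
    unfolding w_def using vp np by (simp add: field_simps eval_nat_numeral)
  have w2: "w^2 \<le> 1/4"
  proof -
    have "w^2 \<le> (1/2)^2" using w0 w1 by (intro power_mono) auto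
    thus ?thesis by (simp add: power2_eq_square)
  qed
  have "real (2*n choose v) * (243 * real v^4 / (10240 * real n^4))^v
      \<le> (real (2*n) * 3 / real v)^v * (243 * real v^4 / (10240 * real n^4))^v"
    using c by (intro mult_right_mono) auto
  also have "\<dots> = (1458/10240 * w^2 * w)^v"
    unfolding power_mult_distrib[symmetric] base ..
  also have "\<dots> \<le> (w/28)^v"
  proof (intro power_mono)
    have "1458/10240 * w^2 \<le> 1/28" using w2 by simp
    thus "1458/10240 * w^2 * w \<le> w/28"
      using w0 mult_right_mono[of "1458/10240 * w^2" "1/28" w] by simp
  qed (use w0 in auto)
  also have "\<dots> = w^(v-14) * w^14 / (2^v * 14^v)"
  proof -
    have "(w/28)^v = w^v / 28^v" by (simp add: power_divide)
    also have "w^v = w^(v-14) * w^14"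
      using assms by (simp add: power_add[symmetric])
    also have "(28::real)^v = 2^v * 14^v" by (simp flip: power_mult_distrib)
    finally show ?thesis .
  qed
  also have "\<dots> \<le> 1 * w^14 / (2^v * 14^v)"
    using w0 w1 by (intro mult_right_mono divide_right_mono power_le_one) auto
  also have "\<dots> = (2 * real v^14 / 14^v) / (real n^14 * 2^(v+1))"
    unfolding w_def using np by (simp add: power_divide field_simps)
  also have "\<dots> \<le> 1 / (real n^14 * 2^(v+1))"
    using pow14[OF assms(2)] np by (intro divide_right_mono) auto
  finally show ?thesis .
qed


lemma finX: "finite (Knn_vertices n)" unfolding Knn_vertices_def by auto

lemma cardX: "card (Knn_vertices n) = 2*n"
proof -
  have "card (Inl ` {..<n} \<union> Inr ` {..<n} :: (nat+nat) set) = card (Inl ` {..<n} :: (nat+nat) set) + card (Inr ` {..<n} :: (nat+nat) set)"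
    by (intro card_Un_disjoint) auto
  also have "\<dots> = n + n" by (simp add: card_image)
  finally show ?thesis unfolding Knn_vertices_def by simp
qed

lemma finE: "finite (Knn_edges n)" unfolding Knn_edges_def by auto

lemma cardE:
  assumes "V \<subseteq> Knn_vertices n"
  shows "4 * real (card (induced_edges (Knn_edges n) V)) \<le> real (card V)^2"
proof -
  define A where "A = {i. i < n \<and> Inl i \<in> V}"
  define B where "B = {j. j < n \<and> Inr j \<in> V}"
  have eq: "induced_edges (Knn_edges n) V = A \<times> B"
    unfolding induced_edges_def Knn_edges_def A_def B_def by auto
  have fin: "finite A" "finite B" unfolding A_def B_def by auto
  have "card ((Inl ` A \<union> Inr ` B) :: (nat+nat) set) = card (Inl ` A :: (nat+nat) set) + card (Inr ` B :: (nat+nat) set)"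
    using fin by (intro card_Un_disjoint) auto
  also have "\<dots> = card A + card B" by (simp add: card_image)
  finally have c1: "card ((Inl ` A \<union> Inr ` B) :: (nat+nat) set) = card A + card B" .
  have "Inl ` A \<union> Inr ` B \<subseteq> V" unfolding A_def B_def by auto
  moreover have "finite V" using assms finX finite_subset by blast
  ultimately have "card A + card B \<le> card V" using c1 card_mono by metis
  hence le: "real (card A) + real (card B) \<le> real (card V)" by linarith
  have "0 \<le> (real (card A) - real (card B))^2" by simp
  hence "4 * (real (card A) * real (card B)) \<le> (real (card A) + real (card B))^2"
    by (simp add: power2_eq_square algebra_simps)
  also have "\<dots> \<le> real (card V)^2" using le by (intro power_mono) auto
  finally show ?thesis unfolding eq card_cartesian_product by simp
qed

theorem lemma2p6:
  fixes C \<alpha> \<gamma> r :: real and n :: nat and \<mu> :: "(nat \<times> nat) set pmf"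
  assumes "C > 1"
    and "0 < \<alpha>" and "\<alpha> < 1/4"
    and "\<gamma> > C * (20 * \<alpha>) powr (1/5)"
    and "r > 5 / \<gamma>"
    and "spread (C * r / real n) n \<mu>"
  shows "measure_pmf.prob \<mu> {H. sparse n \<alpha> (\<gamma> * r / real n) H} \<ge> 1 - 1 / real n ^ 14"
proof (cases "n = 0")
  case True
  have "{H. sparse n \<alpha> (\<gamma> * r / real n) H} = UNIV"
    using True by (auto simp: sparse_def Knn_vertices_def induced_edges_def)
  thus ?thesis using True by simp
next
  case False
  hence n: "n > 0" by simp
  note C = assms(1) and a = assms(2,3)
  define g where "g = (20 * \<alpha>) powr (1/5)"
  have gp: "g > 0" unfolding g_def using a by simp
  have g5: "g^5 = 20*\<alpha>"
  proof -
    have "g^5 = g powr (real 5)" using gp by (simp add: powr_realpow)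
    also have "\<dots> = 20*\<alpha>" unfolding g_def using a by (simp add: powr_powr)
    finally show ?thesis .
  qed
  have gam: "\<gamma> > C*g" using assms(4) g_def by simp
  have "C*g > 0" using C gp by simp
  hence gpos: "\<gamma> > 0" using gam by linarith
  have gam5: "\<gamma>^5 > 20*\<alpha>*C^5"
  proof -
    have "(C*g)^5 < \<gamma>^5" using gam C gp by (intro power_strict_mono) auto
    thus ?thesis using g5 by (simp add: power_mult_distrib mult.commute)
  qed
  have "5/\<gamma> > 0" using gpos by simp
  hence rpos: "r > 0" using assms(5) by linarith
  have t5: "\<gamma> * r > 5" using assms(5) gpos by (simp add: divide_less_eq mult.commute)
  define q where "q = C * r / real n"
  define t where "t = \<gamma> * r"
  define X where "X = Knn_vertices n"
  define E where "E = (\<lambda>V. induced_edges (Knn_edges n) V)"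
  define kf where "kf = (\<lambda>V::(nat+nat) set. nat \<lfloor>t * real (card V)\<rfloor> + 1)"
  define Vs where "Vs = {V. V \<subseteq> X \<and> real (card V) < 2*\<alpha>*real n}"
  define I where "I = Sigma Vs (\<lambda>V. {S. S \<subseteq> E V \<and> card S = kf V})"
  define Bd where "Bd = (\<lambda>v::nat. if 21 \<le> v then (243 * real v^4 / (10240 * real n^4))^v else 0)"
  have Bd0: "Bd v \<ge> 0" for v unfolding Bd_def by auto
  have spr: "set_pmf \<mu> \<subseteq> Pow (Knn_edges n)"
    "\<And>S. S \<subseteq> Knn_edges n \<Longrightarrow> measure_pmf.prob \<mu> {H. S \<subseteq> H} \<le> q ^ card S"
    using assms(6) unfolding spread_def q_def by auto
  have finVs: "finite Vs" unfolding Vs_def X_def using finX by (auto intro: finite_subset[of _ "Pow (Knn_vertices n)"])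
  have finEV: "finite (E V)" for V unfolding E_def induced_edges_def using finE[of n] by (auto intro: finite_subset)
  have EK: "E V \<subseteq> Knn_edges n" for V unfolding E_def induced_edges_def by auto
  have finI: "finite I" unfolding I_def using finVs finEV by (auto intro!: finite_SigmaI)
  have cover: "{H. \<not> sparse n \<alpha> (\<gamma> * r / real n) H} \<inter> set_pmf \<mu> \<subseteq> (\<Union>p\<in>I. {H. snd p \<subseteq> H})"
  proof
    fix H assume H: "H \<in> {H. \<not> sparse n \<alpha> (\<gamma> * r / real n) H} \<inter> set_pmf \<mu>"
    hence HK: "H \<subseteq> Knn_edges n" using spr(1) by auto
    from H obtain V where V: "V \<subseteq> X" "real (card V) < 2 * \<alpha> * real n"
      "real (card (induced_edges H V)) > \<gamma> * r / real n * real n * real (card V)"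
      unfolding sparse_def X_def by auto
    have "\<gamma> * r / real n * real n = t" unfolding t_def using n by simp
    hence c: "real (card (induced_edges H V)) > t * real (card V)" using V(3) by simp
    have "kf V \<le> card (induced_edges H V)"
    proof -
      have "of_int \<lfloor>t * real (card V)\<rfloor> < real (card (induced_edges H V))" using c
        by (meson floor_le_iff less_le_trans of_int_floor_le linorder_not_le not_less_iff_gr_or_eq)
      hence fl: "\<lfloor>t * real (card V)\<rfloor> < int (card (induced_edges H V))" by linarith
      have f0: "0 \<le> \<lfloor>t * real (card V)\<rfloor>" using t5 unfolding t_def by simp
      hence "nat \<lfloor>t * real (card V)\<rfloor> < card (induced_edges H V)" using fl by (simp add: nat_less_iff)
      thus ?thesis unfolding kf_def by simp
    qed
    moreover have sub: "induced_edges H V \<subseteq> E V" unfolding E_def induced_edges_def using HK by auto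
    ultimately obtain S where S: "S \<subseteq> induced_edges H V" "card S = kf V"
      using obtain_subset_with_card_n by metis
    have "(V, S) \<in> I" unfolding I_def Vs_def using V S sub by auto
    moreover have "S \<subseteq> H" using S(1) unfolding induced_edges_def by auto
    ultimately show "H \<in> (\<Union>p\<in>I. {H. snd p \<subseteq> H})" by force
  qed
  have "measure_pmf.prob \<mu> {H. \<not> sparse n \<alpha> (\<gamma> * r / real n) H}
      = measure_pmf.prob \<mu> ({H. \<not> sparse n \<alpha> (\<gamma> * r / real n) H} \<inter> set_pmf \<mu>)"
    by (simp add: measure_Int_set_pmf)
  also have "\<dots> \<le> measure_pmf.prob \<mu> (\<Union>p\<in>I. {H. snd p \<subseteq> H})"
    using cover by (intro measure_pmf.finite_measure_mono) auto
  also have "\<dots> \<le> (\<Sum>p\<in>I. measure_pmf.prob \<mu> {H. snd p \<subseteq> H})"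
    using finI by (intro measure_pmf.finite_measure_subadditive_finite) auto
  also have "\<dots> \<le> (\<Sum>p\<in>I. q ^ card (snd p))"
  proof (intro sum_mono)
    fix p assume "p \<in> I"
    hence "snd p \<subseteq> Knn_edges n" unfolding I_def using EK by fastforce
    thus "measure_pmf.prob \<mu> {H. snd p \<subseteq> H} \<le> q ^ card (snd p)" using spr(2) by blast
  qed
  also have "\<dots> = (\<Sum>V\<in>Vs. \<Sum>S\<in>{S. S \<subseteq> E V \<and> card S = kf V}. q ^ card S)"
    unfolding I_def using finVs finEV by (subst sum.Sigma) (auto simp: split_beta)
  also have "\<dots> = (\<Sum>V\<in>Vs. real (card (E V) choose kf V) * q ^ kf V)"
  proof (intro sum.cong refl)
    fix V
    have "(\<Sum>S\<in>{S. S \<subseteq> E V \<and> card S = kf V}. q ^ card S) = (\<Sum>S\<in>{S. S \<subseteq> E V \<and> card S = kf V}. q ^ kf V)"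
      by (intro sum.cong) auto
    also have "\<dots> = real (card (E V) choose kf V) * q ^ kf V"
      using n_subsets[OF finEV[of V], of "kf V"] by simp
    finally show "(\<Sum>S\<in>{S. S \<subseteq> E V \<and> card S = kf V}. q ^ card S) = real (card (E V) choose kf V) * q ^ kf V" .
  qed
  also have "\<dots> \<le> (\<Sum>V\<in>Vs. Bd (card V))"
  proof (intro sum_mono)
    fix V assume "V \<in> Vs"
    hence V: "V \<subseteq> Knn_vertices n" "real (card V) < 2*\<alpha>*real n" unfolding Vs_def X_def by auto
    define m where "m = card (E V)"
    define v where "v = card V"
    have mr: "4 * real m \<le> real v ^ 2" unfolding m_def v_def E_def using cardE[OF V(1)] .
    have kr: "real (kf V) > t * real v" unfolding kf_def v_def by linarith
    show "real (card (E V) choose kf V) * q ^ kf V \<le> Bd (card V)"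
    proof (cases "kf V \<le> m")
      case False
      hence z: "card (E V) choose kf V = 0" unfolding m_def by simp
      show ?thesis unfolding z using Bd0[of "card V"] by simp
    next
      case True
      have "5 * real v \<le> t * real v" using t5 unfolding t_def by (intro mult_right_mono) auto
      hence "20 * real v < 4 * real m" using kr True by linarith
      hence v20: "20 * real v < real v ^ 2" using mr by linarith
      hence vp: "v > 0" by (cases "v = 0") auto
      have "20 < real v" using v20 vp by (simp add: power2_eq_square)
      hence v21: "21 \<le> v" by linarith
      have m4: "4 * m \<le> v^2" using mr by (metis of_nat_le_iff of_nat_mult of_nat_numeral of_nat_power)
      have "real (m choose kf V) * (C*r/real n)^(kf V) \<le> (243 * real v^4 / (10240 * real n^4))^v"
        by (rule perV[OF C a gpos gam5 rpos t5 n vp]) (use V kr m4 in \<open>simp_all add: v_def t_def\<close>)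
      thus ?thesis unfolding Bd_def q_def m_def v_def using v21 v_def by simp
    qed
  qed
  also have "\<dots> = (\<Sum>v\<in>{..2*n}. \<Sum>V\<in>{V \<in> Vs. card V = v}. Bd (card V))"
  proof (rule sum.group[symmetric])
    show "finite Vs" by fact
    show "finite {..2*n}" by simp
    show "card ` Vs \<subseteq> {..2*n}"
    proof
      fix x assume "x \<in> card ` Vs"
      then obtain V where "V \<in> Vs" "x = card V" by auto
      hence "V \<subseteq> X" "x = card V" unfolding Vs_def by auto
      thus "x \<in> {..2*n}" using card_mono[OF finX[of n], of V] cardX[of n] unfolding X_def by auto
    qed
  qed
  also have "\<dots> \<le> (\<Sum>v\<in>{..2*n}. 1 / (real n^14 * 2^(v+1)))"
  proof (intro sum_mono)
    fix v
    have "(\<Sum>V\<in>{V \<in> Vs. card V = v}. Bd (card V)) = real (card {V \<in> Vs. card V = v}) * Bd v"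
      by simp
    also have "\<dots> \<le> 1 / (real n^14 * 2^(v+1))"
    proof (cases "{V \<in> Vs. card V = v} = {} \<or> v < 21")
      case True
      show ?thesis
      proof (cases "v < 21")
        case True thus ?thesis unfolding Bd_def by simp
      next
        case False
        hence e: "{V \<in> Vs. card V = v} = {}" using \<open>{V \<in> Vs. card V = v} = {} \<or> v < 21\<close> by auto
        show ?thesis unfolding e by simp
      qed
    next
      case False
      then obtain V0 where V0: "V0 \<in> Vs" "card V0 = v" by auto
      hence "real v < 2*\<alpha>*real n" unfolding Vs_def by auto
      moreover have "2*\<alpha>*real n \<le> (1/2) * real n" using a by (intro mult_right_mono) auto
      ultimately have "real v < real n / 2" by linarith
      hence v2: "2 * v \<le> n" by linarith
      have v21: "21 \<le> v" using False by auto
      have "card {V \<in> Vs. card V = v} \<le> card {V. V \<subseteq> X \<and> card V = v}"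
        using finX[of n] unfolding Vs_def X_def by (intro card_mono) auto
      also have "\<dots> = 2*n choose v" using n_subsets[OF finX[of n], of v] cardX[of n] unfolding X_def by simp
      finally have cc: "real (card {V \<in> Vs. card V = v}) \<le> real (2*n choose v)" by simp
      have "real (card {V \<in> Vs. card V = v}) * Bd v \<le> real (2*n choose v) * Bd v"
        using cc Bd0 by (intro mult_right_mono) auto
      also have "\<dots> \<le> 1 / (real n^14 * 2^(v+1))"
        using perv[OF n v21 v2] v21 unfolding Bd_def by simp
      finally show ?thesis .
    qed
    finally show "(\<Sum>V\<in>{V \<in> Vs. card V = v}. Bd (card V)) \<le> 1 / (real n^14 * 2^(v+1))" .
  qed
  also have "\<dots> = (\<Sum>v\<le>2*n. 1 / (2::real)^(v+1)) / real n^14"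
    by (simp add: sum_divide_distrib mult_ac)
  also have "\<dots> \<le> 1 / real n^14"
    using geo[of "2*n"] n by (intro divide_right_mono) auto
  finally have bad: "measure_pmf.prob \<mu> {H. \<not> sparse n \<alpha> (\<gamma> * r / real n) H} \<le> 1 / real n ^ 14" .
  have "measure_pmf.prob \<mu> {H. sparse n \<alpha> (\<gamma> * r / real n) H} = 1 - measure_pmf.prob \<mu> {H. \<not> sparse n \<alpha> (\<gamma> * r / real n) H}"
    using measure_pmf.prob_compl[of "{H. \<not> sparse n \<alpha> (\<gamma> * r / real n) H}" \<mu>]
    by (simp add: Compl_eq_Diff_UNIV[symmetric] Collect_neg_eq[symmetric])
  thus ?thesis using bad by simp
qed

end
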